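(* The logic $\mathsf{CS4}$ has the finite model property: for every formula $\varphi$, if $\mathsf{CS4}\nvdash\varphi$, then there is a $\mathsf{CS4}$-model $\mathcal M=(W,W_\bot,\preccurlyeq,\sqsubseteq,V)$ with $W$ finite such that $\mathcal M\not\models\varphi$. (Conversely, every theorem of $\mathsf{CS4}$ is valid on all $\mathsf{CS4}$-models.)
   Context: Fix a countably infinite set $\mathbb P$ of propositional variables. Formulas: $\varphi,\psi ::= p\mid\bot\mid(\varphi\wedge\psi)\mid(\varphi\vee\psi)\mid(\varphi\to\psi)\mid\Diamond\varphi\mid\Box\varphi$ with $p\in\mathbb P$; $\neg\varphi:=\varphi\to\bot$. A bi-intuitionistic frame is $\mathcal F=(W,W_\bot,\preccurlyeq,\sqsubseteq)$ where $\preccurlyeq$ and $\sqsubseteq$ are preorders on a set $W$ and $W_\bot\subseteq W$ (the fallible worlds) is upward closed under both $\preccurlyeq$ and $\sqsubseteq$; it is infallible if $W_\bot=\varnothing$. A valuation is a map $V:\mathbb P\to 2^W$ such that each $V(p)$ is upward closed under $\preccurlyeq$ and $W_\bot\subseteq V(p)$; a model is $\mathcal M=(W,W_\bot,\preccurlyeq,\sqsubseteq,V)$. Satisfaction: $(\mathcal M,w)\models p$ iff $w\in V(p)$; $(\mathcal M,w)\models\bot$ iff $w\in W_\bot$; $\wedge,\vee$ pointwise; $(\mathcal M,w)\models\varphi\to\psi$ iff for all $v\succcurlyeq w$, $(\mathcal M,v)\models\varphi$ implies $(\mathcal M,v)\models\psi$; $(\mathcal M,w)\models\Diamond\varphi$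 iff for all $u\succcurlyeq w$ there is $v\sqsupseteq u$ with $(\mathcal M,v)\models\varphi$; $(\mathcal M,w)\models\Box\varphi$ iff for all $u,v$ with $w\preccurlyeq u\sqsubseteq v$, $(\mathcal M,v)\models\varphi$. $\mathcal M\models\varphi$ means $(\mathcal M,w)\models\varphi$ for all $w\in W\setminus W_\bot$. For $R\subseteq W\times W$ (relative to $\preccurlyeq$): $R$ is backward confluent if $wRv\preccurlyeq v'$ implies there is $w'$ with $w\preccurlyeq w'Rv'$. A $\mathsf{CS4}$-frame is a bi-intuitionistic frame in which $\sqsubseteq$ is backward confluent; a $\mathsf{CS4}$-model is a model on such a frame. $\mathsf{CS4}$ is the least set of formulas containing all intuitionistic propositional tautologies (in this language) and all instances of $\Box(\varphi\to\psi)\to(\Box\varphi\to\Box\psi)$, $\Box(\varphi\to\psi)\to(\Diamond\varphi\to\Diamond\psi)$, $\Box\varphi\to\varphi$, $\varphi\to\Diamond\varphi$, $\Box\varphi\to\Box\Box\varphi$, $\Diamond\Diamond\varphi\to\Diamond\varphi$, closed under modus ponens and necessitation (from $\varphi$ infer $\Box\varphi$). *)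

theory Defs
  imports Main
begin

datatype fm =
    Var nat
  | Bot
  | And fm fm
  | Or fm fm
  | Imp fm fm
  | Dia fm
  | Box fm

definition Neg :: "fm \<Rightarrow> fm" where "Neg \<phi> = Imp \<phi> Bot"

inductive ipc_thm :: "fm \<Rightarrow> bool" where
  ax1: "ipc_thm (Imp \<phi> (Imp \<psi> \<phi>))"
| ax2: "ipc_thm (Imp (Imp \<phi> (Imp \<psi> \<chi>)) (Imp (Imp \<phi> \<psi>) (Imp \<phi> \<chi>)))"
| ax3: "ipc_thm (Imp (And \<phi> \<psi>) \<phi>)"
| ax4: "ipc_thm (Imp (And \<phi> \<psi>) \<psi>)"
| ax5: "ipc_thm (Imp \<phi> (Imp \<psi> (And \<phi> \<psi>)))"
| ax6: "ipc_thm (Imp \<phi> (Or \<phi> \<psi>))"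
| ax7: "ipc_thm (Imp \<psi> (Or \<phi> \<psi>))"
| ax8: "ipc_thm (Imp (Imp \<phi> \<chi>) (Imp (Imp \<psi> \<chi>) (Imp (Or \<phi> \<psi>) \<chi>)))"
| ax9: "ipc_thm (Imp Bot \<phi>)"
| mp: "ipc_thm (Imp \<phi> \<psi>) \<Longrightarrow> ipc_thm \<phi> \<Longrightarrow> ipc_thm \<psi>"

inductive CS4 :: "fm \<Rightarrow> bool" where
  ipc: "ipc_thm \<phi> \<Longrightarrow> CS4 \<phi>"
| K_box: "CS4 (Imp (Box (Imp \<phi> \<psi>)) (Imp (Box \<phi>) (Box \<psi>)))"
| K_dia: "CS4 (Imp (Box (Imp \<phi> \<psi>)) (Imp (Dia \<phi>) (Dia \<psi>)))"
| T_box: "CS4 (Imp (Box \<phi>) \<phi>)"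
| T_dia: "CS4 (Imp \<phi> (Dia \<phi>))"
| four_box: "CS4 (Imp (Box \<phi>) (Box (Box \<phi>)))"
| four_dia: "CS4 (Imp (Dia (Dia \<phi>)) (Dia \<phi>))"
| MP: "CS4 (Imp \<phi> \<psi>) \<Longrightarrow> CS4 \<phi> \<Longrightarrow> CS4 \<psi>"
| Nec: "CS4 \<phi> \<Longrightarrow> CS4 (Box \<phi>)"

definition preorder_on :: "'w set \<Rightarrow> ('w \<Rightarrow> 'w \<Rightarrow> bool) \<Rightarrow> bool" where
  "preorder_on W R \<longleftrightarrow>
     (\<forall>x y. R x y \<longrightarrow> x \<in> W \<and> y \<in> W) \<and>
     (\<forall>x\<in>W. R x x) \<and>
     (\<forall>x y z. R x y \<longrightarrow> R y z \<longrightarrow> R x z)"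

definition up_closed :: "('w \<Rightarrow> 'w \<Rightarrow> bool) \<Rightarrow> 'w set \<Rightarrow> bool" where
  "up_closed R A \<longleftrightarrow> (\<forall>x y. x \<in> A \<longrightarrow> R x y \<longrightarrow> y \<in> A)"

definition bi_int_frame ::
  "'w set \<Rightarrow> 'w set \<Rightarrow> ('w \<Rightarrow> 'w \<Rightarrow> bool) \<Rightarrow> ('w \<Rightarrow> 'w \<Rightarrow> bool) \<Rightarrow> bool" where
  "bi_int_frame W Wb le sq \<longleftrightarrow>
     preorder_on W le \<and> preorder_on W sq \<and> Wb \<subseteq> W \<and> up_closed le Wb \<and> up_closed sq Wb"

definition backward_confluent :: "('w \<Rightarrow> 'w \<Rightarrow> bool) \<Rightarrow> ('w \<Rightarrow> 'w \<Rightarrow> bool) \<Rightarrow> bool" where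
  "backward_confluent le R \<longleftrightarrow>
     (\<forall>w v v'. R w v \<longrightarrow> le v v' \<longrightarrow> (\<exists>w'. le w w' \<and> R w' v'))"

definition CS4_frame ::
  "'w set \<Rightarrow> 'w set \<Rightarrow> ('w \<Rightarrow> 'w \<Rightarrow> bool) \<Rightarrow> ('w \<Rightarrow> 'w \<Rightarrow> bool) \<Rightarrow> bool" where
  "CS4_frame W Wb le sq \<longleftrightarrow> bi_int_frame W Wb le sq \<and> backward_confluent le sq"

definition valuation ::
  "'w set \<Rightarrow> 'w set \<Rightarrow> ('w \<Rightarrow> 'w \<Rightarrow> bool) \<Rightarrow> (nat \<Rightarrow> 'w set) \<Rightarrow> bool" where
  "valuation W Wb le V \<longleftrightarrow> (\<forall>p. V p \<subseteq> W \<and> up_closed le (V p) \<and> Wb \<subseteq> V p)"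

definition CS4_model ::
  "'w set \<Rightarrow> 'w set \<Rightarrow> ('w \<Rightarrow> 'w \<Rightarrow> bool) \<Rightarrow> ('w \<Rightarrow> 'w \<Rightarrow> bool) \<Rightarrow> (nat \<Rightarrow> 'w set) \<Rightarrow> bool" where
  "CS4_model W Wb le sq V \<longleftrightarrow> CS4_frame W Wb le sq \<and> valuation W Wb le V"

fun sat ::
  "'w set \<Rightarrow> ('w \<Rightarrow> 'w \<Rightarrow> bool) \<Rightarrow> ('w \<Rightarrow> 'w \<Rightarrow> bool) \<Rightarrow> (nat \<Rightarrow> 'w set) \<Rightarrow> 'w \<Rightarrow> fm \<Rightarrow> bool" where
  "sat Wb le sq V w (Var p) \<longleftrightarrow> w \<in> V p"
| "sat Wb le sq V w Bot \<longleftrightarrow> w \<in> Wb"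
| "sat Wb le sq V w (And \<phi> \<psi>) \<longleftrightarrow> sat Wb le sq V w \<phi> \<and> sat Wb le sq V w \<psi>"
| "sat Wb le sq V w (Or \<phi> \<psi>) \<longleftrightarrow> sat Wb le sq V w \<phi> \<or> sat Wb le sq V w \<psi>"
| "sat Wb le sq V w (Imp \<phi> \<psi>) \<longleftrightarrow>
     (\<forall>v. le w v \<longrightarrow> sat Wb le sq V v \<phi> \<longrightarrow> sat Wb le sq V v \<psi>)"
| "sat Wb le sq V w (Dia \<phi>) \<longleftrightarrow>
     (\<forall>u. le w u \<longrightarrow> (\<exists>v. sq u v \<and> sat Wb le sq V v \<phi>))"
| "sat Wb le sq V w (Box \<phi>) \<longleftrightarrow>
     (\<forall>u v. le w u \<longrightarrow> sq u v \<longrightarrow> sat Wb le sq V v \<phi>)"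

text \<open>Validity in a model: truth at every infallible world.\<close>
definition valid_in ::
  "'w set \<Rightarrow> 'w set \<Rightarrow> ('w \<Rightarrow> 'w \<Rightarrow> bool) \<Rightarrow> ('w \<Rightarrow> 'w \<Rightarrow> bool) \<Rightarrow> (nat \<Rightarrow> 'w set) \<Rightarrow> fm \<Rightarrow> bool" where
  "valid_in W Wb le sq V \<phi> \<longleftrightarrow> (\<forall>w \<in> W - Wb. sat Wb le sq V w \<phi>)"

end

theory Submission
  imports Defs
begin


lemma model_facts:
  assumes "CS4_model W Wb le sq V"
  shows "\<And>x y. le x y \<Longrightarrow> x \<in> W \<and> y \<in> W" "\<And>x. x\<in>W \<Longrightarrow> le x x"
    "\<And>x y z. le x y \<Longrightarrow> le y z \<Longrightarrow> le x z"
    "\<And>x y. sq x y \<Longrightarrow> x \<in> W \<and> y \<in> W" "\<And>x. x\<in>W \<Longrightarrow> sq x x"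
    "\<And>x y z. sq x y \<Longrightarrow> sq y z \<Longrightarrow> sq x z"
    "Wb \<subseteq> W" "\<And>x y. x \<in> Wb \<Longrightarrow> le x y \<Longrightarrow> y \<in> Wb" "\<And>x y. x \<in> Wb \<Longrightarrow> sq x y \<Longrightarrow> y \<in> Wb"
    "\<And>w v v'. sq w v \<Longrightarrow> le v v' \<Longrightarrow> \<exists>w'. le w w' \<and> sq w' v'"
    "\<And>p. V p \<subseteq> W" "\<And>p x y. x \<in> V p \<Longrightarrow> le x y \<Longrightarrow> y \<in> V p" "\<And>p. Wb \<subseteq> V p"
proof -
  have d: "preorder_on W le" "preorder_on W sq" "Wb \<subseteq> W" "up_closed le Wb" "up_closed sq Wb"
    "backward_confluent le sq" "valuation W Wb le V"
    using assms unfolding CS4_model_def CS4_frame_def bi_int_frame_def by simp_all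
  show "\<And>x y. le x y \<Longrightarrow> x \<in> W \<and> y \<in> W" using d(1) unfolding preorder_on_def by blast
  show "\<And>x. x\<in>W \<Longrightarrow> le x x" using d(1) unfolding preorder_on_def by blast
  show "\<And>x y z. le x y \<Longrightarrow> le y z \<Longrightarrow> le x z" using d(1) unfolding preorder_on_def by blast
  show "\<And>x y. sq x y \<Longrightarrow> x \<in> W \<and> y \<in> W" using d(2) unfolding preorder_on_def by blast
  show "\<And>x. x\<in>W \<Longrightarrow> sq x x" using d(2) unfolding preorder_on_def by blast
  show "\<And>x y z. sq x y \<Longrightarrow> sq y z \<Longrightarrow> sq x z" using d(2) unfolding preorder_on_def by blast
  show "Wb \<subseteq> W" by (rule d(3))
  show "\<And>x y. x \<in> Wb \<Longrightarrow> le x y \<Longrightarrow> y \<in> Wb" using d(4) unfolding up_closed_def by blast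
  show "\<And>x y. x \<in> Wb \<Longrightarrow> sq x y \<Longrightarrow> y \<in> Wb" using d(5) unfolding up_closed_def by blast
  show "\<And>w v v'. sq w v \<Longrightarrow> le v v' \<Longrightarrow> \<exists>w'. le w w' \<and> sq w' v'"
    using d(6) unfolding backward_confluent_def by blast
  show "\<And>p. V p \<subseteq> W" using d(7) unfolding valuation_def by blast
  show "\<And>p x y. x \<in> V p \<Longrightarrow> le x y \<Longrightarrow> y \<in> V p" using d(7) unfolding valuation_def up_closed_def by blast
  show "\<And>p. Wb \<subseteq> V p" using d(7) unfolding valuation_def by blast
qed

lemma persist:
  assumes M: "CS4_model W Wb le sq V"
  shows "le w v \<Longrightarrow> sat Wb le sq V w \<chi> \<Longrightarrow> sat Wb le sq V v \<chi>"
proof (induction \<chi> arbitrary: w v)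
  case (Var p) then show ?case using model_facts(12)[OF M] by simp
next
  case Bot then show ?case using model_facts(8)[OF M] by simp
next
  case (And a b) then show ?case by simp
next
  case (Or a b) then show ?case by (simp, blast)
next
  case (Imp a b)
  show ?case unfolding sat.simps
  proof (intro allI impI)
    fix u assume "le v u" "sat Wb le sq V u a"
    moreover have "le w u" using model_facts(3)[OF M] Imp.prems(1) \<open>le v u\<close> .
    ultimately show "sat Wb le sq V u b" using Imp.prems(2) by simp
  qed
next
  case (Dia a)
  show ?case unfolding sat.simps
  proof (intro allI impI)
    fix u assume "le v u"
    moreover have "le w u" using model_facts(3)[OF M] Dia.prems(1) \<open>le v u\<close> .
    ultimately show "\<exists>x. sq u x \<and> sat Wb le sq V x a" using Dia.prems(2) by simp
  qed
next
  case (Box a)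
  show ?case unfolding sat.simps
  proof (intro allI impI)
    fix u x assume "le v u" "sq u x"
    moreover have "le w u" using model_facts(3)[OF M] Box.prems(1) \<open>le v u\<close> .
    ultimately show "sat Wb le sq V x a" using Box.prems(2) by simp
  qed
qed

lemma fallible_all:
  assumes M: "CS4_model W Wb le sq V"
  shows "w \<in> Wb \<Longrightarrow> sat Wb le sq V w \<chi>"
proof (induction \<chi> arbitrary: w)
  case (Var p) then show ?case using model_facts(13)[OF M] by auto
next
  case Bot then show ?case by simp
next
  case (And a b) then show ?case by simp
next
  case (Or a b) then show ?case by simp
next
  case (Imp a b)
  show ?case unfolding sat.simps
  proof (intro allI impI)
    fix u assume "le w u"
    then have "u \<in> Wb" using model_facts(8)[OF M] Imp.prems by blast
    then show "sat Wb le sq V u b" by (rule Imp.IH(2))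
  qed
next
  case (Dia a)
  show ?case unfolding sat.simps
  proof (intro allI impI)
    fix u assume "le w u"
    then have "u \<in> Wb" using model_facts(8)[OF M] Dia.prems by blast
    moreover then have "sq u u" using model_facts(5,7)[OF M] by blast
    ultimately show "\<exists>x. sq u x \<and> sat Wb le sq V x a" using Dia.IH by blast
  qed
next
  case (Box a)
  show ?case unfolding sat.simps
  proof (intro allI impI)
    fix u x assume "le w u" "sq u x"
    then have "x \<in> Wb" using model_facts(8,9)[OF M] Box.prems by blast
    then show "sat Wb le sq V x a" by (rule Box.IH)
  qed
qed

lemma ipc_sound:
  assumes M: "CS4_model W Wb le sq V"
  shows "ipc_thm \<chi> \<Longrightarrow> w \<in> W \<Longrightarrow> sat Wb le sq V w \<chi>"
proof (induction \<chi> arbitrary: w rule: ipc_thm.induct)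
  case (ax1 \<phi> \<psi>)
  show ?case unfolding sat.simps
  proof (intro allI impI)
    fix u v assume "le w u" "sat Wb le sq V u \<phi>" "le u v"
    then show "sat Wb le sq V v \<phi>" using persist[OF M] by blast
  qed
next
  case (ax2 \<phi> \<psi> \<chi>)
  show ?case unfolding sat.simps
  proof (intro allI impI)
    fix v1 v2 v3 assume 1: "le w v1" "le v1 v2" "le v2 v3"
      and h1: "\<forall>v. le v1 v \<longrightarrow> sat Wb le sq V v \<phi> \<longrightarrow> (\<forall>va. le v va \<longrightarrow> sat Wb le sq V va \<psi> \<longrightarrow> sat Wb le sq V va \<chi>)"
      and h2: "\<forall>v. le v2 v \<longrightarrow> sat Wb le sq V v \<phi> \<longrightarrow> sat Wb le sq V v \<psi>"
      and h3: "sat Wb le sq V v3 \<phi>"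
    have a: "le v1 v3" using model_facts(3)[OF M] 1(2,3) .
    have b: "le v3 v3" using model_facts(1,2)[OF M] 1(3) by blast
    have c: "sat Wb le sq V v3 \<psi>" using h2 h3 1(3) by blast
    show "sat Wb le sq V v3 \<chi>" using h1 a h3 b c by blast
  qed
next
  case (ax3 \<phi> \<psi>) then show ?case by simp
next
  case (ax4 \<phi> \<psi>) then show ?case by simp
next
  case (ax5 \<phi> \<psi>)
  show ?case unfolding sat.simps
  proof (intro allI impI conjI)
    fix u v assume "le w u" "sat Wb le sq V u \<phi>" "le u v" "sat Wb le sq V v \<psi>"
    then show "sat Wb le sq V v \<phi>" "sat Wb le sq V v \<psi>" using persist[OF M] by blast+
  qed
next
  case (ax6 \<phi> \<psi>) then show ?case by simp
next
  case (ax7 \<phi> \<psi>) then show ?case by simp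
next
  case (ax8 \<phi> \<chi> \<psi>)
  show ?case
  proof (unfold sat.simps, intro allI impI)
    fix v1 v2 v3 assume 1: "le w v1" "le v1 v2" "le v2 v3"
      and h1: "\<forall>v. le v1 v \<longrightarrow> sat Wb le sq V v \<phi> \<longrightarrow> sat Wb le sq V v \<chi>"
      and h2: "\<forall>v. le v2 v \<longrightarrow> sat Wb le sq V v \<psi> \<longrightarrow> sat Wb le sq V v \<chi>"
      and h3: "sat Wb le sq V v3 \<phi> \<or> sat Wb le sq V v3 \<psi>"
    have "le v1 v3" using model_facts(3)[OF M] 1(2,3) .
    then show "sat Wb le sq V v3 \<chi>" using h1 h2 h3 1(3) by blast
  qed
next
  case (ax9 \<phi>)
  show ?case unfolding sat.simps
  proof (intro allI impI)
    fix v assume "v \<in> Wb" then show "sat Wb le sq V v \<phi>" using fallible_all[OF M] by blast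
  qed
next
  case (mp \<phi> \<psi>)
  have "le w w" using model_facts(2)[OF M] mp.prems .
  then show ?case using mp.IH mp.prems by simp
qed

lemma CS4_sound:
  assumes M: "CS4_model W Wb le sq V"
  shows "CS4 \<chi> \<Longrightarrow> w \<in> W \<Longrightarrow> sat Wb le sq V w \<chi>"
proof (induction \<chi> arbitrary: w rule: CS4.induct)
  case (ipc \<phi>) then show ?case using ipc_sound[OF M] by blast
next
  case (K_box \<phi> \<psi>)
  show ?case unfolding sat.simps
  proof (intro allI impI)
    fix v1 v2 u x assume 1: "le w v1" "le v1 v2" "le v2 u" "sq u x"
      and h1: "\<forall>u v. le v1 u \<longrightarrow> sq u v \<longrightarrow> (\<forall>va. le v va \<longrightarrow> sat Wb le sq V va \<phi> \<longrightarrow> sat Wb le sq V va \<psi>)"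
      and h2: "\<forall>u v. le v2 u \<longrightarrow> sq u v \<longrightarrow> sat Wb le sq V v \<phi>"
    have a: "le v1 u" using model_facts(3)[OF M] 1(2,3) .
    have b: "le x x" using model_facts(2,4)[OF M] 1(4) by blast
    show "sat Wb le sq V x \<psi>" using h1 h2 a b 1(3,4) by blast
  qed
next
  case (K_dia \<phi> \<psi>)
  show ?case unfolding sat.simps
  proof (intro allI impI)
    fix v1 v2 u assume 1: "le w v1" "le v1 v2" "le v2 u"
      and h1: "\<forall>u v. le v1 u \<longrightarrow> sq u v \<longrightarrow> (\<forall>va. le v va \<longrightarrow> sat Wb le sq V va \<phi> \<longrightarrow> sat Wb le sq V va \<psi>)"
      and h2: "\<forall>u. le v2 u \<longrightarrow> (\<exists>v. sq u v \<and> sat Wb le sq V v \<phi>)"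
    obtain x where x: "sq u x" "sat Wb le sq V x \<phi>" using h2 1(3) by blast
    have a: "le v1 u" using model_facts(3)[OF M] 1(2,3) .
    have b: "le x x" using model_facts(2,4)[OF M] x(1) by blast
    have "sat Wb le sq V x \<psi>" using h1 a b x by blast
    then show "\<exists>v. sq u v \<and> sat Wb le sq V v \<psi>" using x by blast
  qed
next
  case (T_box \<phi>)
  show ?case unfolding sat.simps
  proof (intro allI impI)
    fix v assume 1: "le w v" and h: "\<forall>u va. le v u \<longrightarrow> sq u va \<longrightarrow> sat Wb le sq V va \<phi>"
    have "v \<in> W" using model_facts(1)[OF M] 1 by blast
    then have "le v v" "sq v v" using model_facts(2,5)[OF M] by blast+
    then show "sat Wb le sq V v \<phi>" using h by blast
  qed
next
  case (T_dia \<phi>)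
  show ?case unfolding sat.simps
  proof (intro allI impI)
    fix v u assume 1: "le w v" "sat Wb le sq V v \<phi>" "le v u"
    have "u \<in> W" using model_facts(1)[OF M] 1(3) by blast
    then have "sq u u" using model_facts(5)[OF M] by blast
    moreover have "sat Wb le sq V u \<phi>" using persist[OF M] 1(2,3) by blast
    ultimately show "\<exists>x. sq u x \<and> sat Wb le sq V x \<phi>" by blast
  qed
next
  case (four_box \<phi>)
  show ?case
  proof (unfold sat.simps, intro allI impI)
    fix v1 u v u' v' assume 1: "le w v1" "le v1 u" "sq u v" "le v u'" "sq u' v'"
      and h: "\<forall>u v. le v1 u \<longrightarrow> sq u v \<longrightarrow> sat Wb le sq V v \<phi>"
    obtain w' where w': "le u w'" "sq w' u'" using model_facts(10)[OF M] 1(3,4) by blast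
    have "le v1 w'" using model_facts(3)[OF M] 1(2) w'(1) .
    moreover have "sq w' v'" using model_facts(6)[OF M] w'(2) 1(5) .
    ultimately show "sat Wb le sq V v' \<phi>" using h by blast
  qed
next
  case (four_dia \<phi>)
  show ?case
  proof (unfold sat.simps, intro allI impI)
    fix v1 u assume 1: "le w v1" "le v1 u"
      and h: "\<forall>u. le v1 u \<longrightarrow> (\<exists>v. sq u v \<and> (\<forall>u. le v u \<longrightarrow> (\<exists>v. sq u v \<and> sat Wb le sq V v \<phi>)))"
    obtain v where v: "sq u v" "\<forall>u. le v u \<longrightarrow> (\<exists>v. sq u v \<and> sat Wb le sq V v \<phi>)" using h 1(2) by blast
    have "v \<in> W" using model_facts(4)[OF M] v(1) by blast
    then have "le v v" using model_facts(2)[OF M] by blast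
    then obtain v' where v': "sq v v'" "sat Wb le sq V v' \<phi>" using v(2) by blast
    have "sq u v'" using model_facts(6)[OF M] v(1) v'(1) .
    then show "\<exists>v. sq u v \<and> sat Wb le sq V v \<phi>" using v'(2) by blast
  qed
next
  case (MP \<phi> \<psi>)
  have "le w w" using model_facts(2)[OF M] MP.prems .
  then show ?case using MP.IH MP.prems by simp
next
  case (Nec \<phi>)
  show ?case unfolding sat.simps
  proof (intro allI impI)
    fix u v assume "le w u" "sq u v"
    then have "v \<in> W" using model_facts(4)[OF M] by blast
    then show "sat Wb le sq V v \<phi>" using Nec.IH by blast
  qed
qed



inductive pf :: "fm set \<Rightarrow> fm \<Rightarrow> bool" for G where
  hyp: "\<chi> \<in> G \<Longrightarrow> pf G \<chi>"
| ax: "CS4 \<chi> \<Longrightarrow> pf G \<chi>"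
| mpp: "pf G (Imp a b) \<Longrightarrow> pf G a \<Longrightarrow> pf G b"

lemma CS4_II: "CS4 (Imp a a)"
proof -
  have "ipc_thm (Imp (Imp a (Imp (Imp a a) a)) (Imp (Imp a (Imp a a)) (Imp a a)))" by (rule ipc_thm.ax2)
  then have "ipc_thm (Imp (Imp a (Imp a a)) (Imp a a))" using ipc_thm.ax1 ipc_thm.mp by blast
  then have "ipc_thm (Imp a a)" using ipc_thm.ax1 ipc_thm.mp by blast
  then show ?thesis by (rule CS4.ipc)
qed

lemma CS4_ipc: "ipc_thm \<chi> \<Longrightarrow> pf G \<chi>" by (intro pf.ax CS4.ipc)

lemma pf_mono: "pf G \<chi> \<Longrightarrow> G \<subseteq> H \<Longrightarrow> pf H \<chi>"
  by (induction rule: pf.induct) (auto intro: pf.intros)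

lemma ded: "pf (insert a G) b \<Longrightarrow> pf G (Imp a b)"
proof (induction rule: pf.induct)
  case (hyp \<chi>)
  then show ?case
  proof
    assume "\<chi> = a" then show ?thesis using CS4_II pf.ax by simp
  next
    assume "\<chi> \<in> G" then show ?thesis using pf.hyp[of \<chi> G] CS4_ipc[OF ipc_thm.ax1[of \<chi> a], of G] pf.mpp by blast
  qed
next
  case (ax \<chi>)
  then show ?case using pf.ax[of \<chi> G] CS4_ipc[OF ipc_thm.ax1[of \<chi> a], of G] pf.mpp by blast
next
  case (mpp c d)
  then show ?case using CS4_ipc[OF ipc_thm.ax2[of a c d], of G] pf.mpp by blast
qed

lemma cut: "pf G a \<Longrightarrow> pf (insert a G) b \<Longrightarrow> pf G b"
  using ded pf.mpp by blast

lemma pf_box: "pf D \<phi> \<Longrightarrow> (\<forall>\<delta>\<in>D. pf G (Box \<delta>)) \<Longrightarrow> pf G (Box \<phi>)"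
proof (induction rule: pf.induct)
  case (hyp \<chi>) then show ?case by blast
next
  case (ax \<chi>) then show ?case by (intro pf.ax CS4.Nec)
next
  case (mpp a b)
  then show ?case using pf.ax[OF CS4.K_box[of a b], of G] pf.mpp by blast
qed

fun sub :: "fm \<Rightarrow> fm set" where
  "sub (Var p) = {Var p}"
| "sub Bot = {Bot}"
| "sub (And a b) = insert (And a b) (sub a \<union> sub b)"
| "sub (Or a b) = insert (Or a b) (sub a \<union> sub b)"
| "sub (Imp a b) = insert (Imp a b) (sub a \<union> sub b)"
| "sub (Dia a) = insert (Dia a) (sub a)"
| "sub (Box a) = insert (Box a) (sub a)"

lemma sub_self: "\<phi> \<in> sub \<phi>" by (cases \<phi>) auto
lemma sub_fin: "finite (sub \<phi>)" by (induction \<phi>) auto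
lemma sub_trans: "\<chi> \<in> sub \<phi> \<Longrightarrow> sub \<chi> \<subseteq> sub \<phi>" by (induction \<phi>) auto

locale clos =
  fixes S :: "fm set"
  assumes fin: "finite S"
    and cAnd: "And a b \<in> S \<Longrightarrow> a \<in> S \<and> b \<in> S"
    and cOr: "Or a b \<in> S \<Longrightarrow> a \<in> S \<and> b \<in> S"
    and cImp: "Imp a b \<in> S \<Longrightarrow> a \<in> S \<and> b \<in> S"
    and cDia: "Dia a \<in> S \<Longrightarrow> a \<in> S"
    and cBox: "Box a \<in> S \<Longrightarrow> a \<in> S"
    and cBot: "Bot \<in> S" "Box Bot \<in> S"
begin

definition prime :: "fm set \<Rightarrow> bool" where
  "prime G \<longleftrightarrow> G \<subseteq> S \<and> (\<forall>\<chi>\<in>S. pf G \<chi> \<longrightarrow> \<chi> \<in> G) \<and> (\<forall>a b. Or a b \<in> G \<longrightarrow> a \<in> G \<or> b \<in> G)"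

lemma lind:
  assumes "G0 \<subseteq> S" "\<not> pf G0 b"
  shows "\<exists>G. prime G \<and> G0 \<subseteq> G \<and> \<not> pf G b"
proof -
  let ?M = "{G. G0 \<subseteq> G \<and> G \<subseteq> S \<and> \<not> pf G b}"
  have "finite ?M" using fin by (rule finite_subset[rotated, OF finite_Pow_iff[THEN iffD2]]) auto
  moreover have "G0 \<in> ?M" using assms by auto
  ultimately obtain G where G: "G \<in> ?M" and mx: "\<forall>H\<in>?M. G \<subseteq> H \<longrightarrow> G = H"
    using finite_has_maximal[of ?M] by blast
  have ins: "pf (insert c G) b" if "c \<in> S" "c \<notin> G" for c
  proof (rule ccontr)
    assume "\<not> pf (insert c G) b"
    then have "insert c G \<in> ?M" using G that by auto
    then show False using mx that by blast
  qed
  have "prime G" unfolding prime_def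
  proof (intro conjI ballI allI impI)
    show "G \<subseteq> S" using G by auto
  next
    fix \<chi> assume "\<chi> \<in> S" "pf G \<chi>"
    then show "\<chi> \<in> G" using ins cut G by blast
  next
    fix c d assume o: "Or c d \<in> G"
    show "c \<in> G \<or> d \<in> G"
    proof (rule ccontr)
      assume "\<not> (c \<in> G \<or> d \<in> G)"
      moreover have "c \<in> S" "d \<in> S" using o G cOr by blast+
      ultimately have "pf G (Imp c b)" "pf G (Imp d b)" using ins ded by blast+
      then have "pf G b" using CS4_ipc[OF ipc_thm.ax8[of c b d], of G] pf.mpp pf.hyp[OF o] by blast
      then show False using G by auto
    qed
  qed
  then show ?thesis using G by auto
qed

definition PW :: "(fm set \<times> fm option) set" where
  "PW = {(G,a). prime G \<and> (\<forall>\<psi>. a = Some \<psi> \<longrightarrow> Dia \<psi> \<in> S \<and> Dia \<psi> \<notin> G)}"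
definition PWb where "PWb = {w\<in>PW. Bot \<in> fst w}"
definition PLe where "PLe x y \<longleftrightarrow> x\<in>PW \<and> y\<in>PW \<and> fst x \<subseteq> fst y"
definition PSq where "PSq x y \<longleftrightarrow> x\<in>PW \<and> y\<in>PW \<and> (\<forall>\<chi>. Box \<chi> \<in> fst x \<longrightarrow> \<chi> \<in> fst y \<and> Box \<chi> \<in> fst y)
   \<and> (\<forall>\<psi>. snd x = Some \<psi> \<longrightarrow> snd y = Some \<psi>)"
definition PV where "PV p = {w\<in>PW. Var p \<in> fst w \<or> Bot \<in> fst w}"

lemma inPW: "(G,a) \<in> PW \<longleftrightarrow> prime G \<and> (\<forall>\<psi>. a = Some \<psi> \<longrightarrow> Dia \<psi> \<in> S \<and> Dia \<psi> \<notin> G)"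
  unfolding PW_def by simp

lemma PW_prime: "w \<in> PW \<Longrightarrow> prime (fst w)"
  by (cases w) (simp add: inPW)

lemma closed: "w \<in> PW \<Longrightarrow> \<chi> \<in> S \<Longrightarrow> pf (fst w) \<chi> \<Longrightarrow> \<chi> \<in> fst w"
  using PW_prime unfolding prime_def by blast

lemma subS: "w \<in> PW \<Longrightarrow> fst w \<subseteq> S"
  using PW_prime unfolding prime_def by blast

lemma primeS: "prime S" unfolding prime_def
proof (intro conjI)
  show "\<forall>a b. Or a b \<in> S \<longrightarrow> a \<in> S \<or> b \<in> S" using cOr by blast
qed blast+


lemma pfT: "pf G (Imp (Box a) a)" by (intro pf.ax CS4.T_box)

lemma is_model: "CS4_model PW PWb PLe PSq PV"
proof -
  have p1: "preorder_on PW PLe" unfolding preorder_on_def PLe_def by blast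
  have p2: "preorder_on PW PSq" unfolding preorder_on_def
  proof (intro conjI)
    show "\<forall>x y. PSq x y \<longrightarrow> x \<in> PW \<and> y \<in> PW" unfolding PSq_def by blast
  next
    show "\<forall>x y z. PSq x y \<longrightarrow> PSq y z \<longrightarrow> PSq x z" unfolding PSq_def by blast
  next
    show "\<forall>x\<in>PW. PSq x x"
    proof
    fix x assume x: "x \<in> PW"
    show "PSq x x" unfolding PSq_def
    proof (intro conjI allI impI x)
      fix \<chi> assume b: "Box \<chi> \<in> fst x"
      show "Box \<chi> \<in> fst x" by (rule b)
      have "\<chi> \<in> S" using b subS[OF x] cBox by blast
      moreover have "pf (fst x) \<chi>" using pf.mpp[OF pfT pf.hyp[OF b]] .
      ultimately show "\<chi> \<in> fst x" using closed[OF x] by blast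
    next
      fix \<psi> assume "snd x = Some \<psi>" then show "snd x = Some \<psi>" .
    qed
    qed
  qed
  have p3: "PWb \<subseteq> PW" unfolding PWb_def by blast
  have p4: "up_closed PLe PWb" unfolding up_closed_def PWb_def PLe_def by blast
  have p5: "up_closed PSq PWb" unfolding up_closed_def
  proof (intro allI impI)
    fix x y assume a: "x \<in> PWb" "PSq x y"
    have xW: "x \<in> PW" and xb: "Bot \<in> fst x" using a unfolding PWb_def by auto
    have "pf (fst x) (Box Bot)" using pf.mpp[OF pf.ax[OF CS4.ipc[OF ipc_thm.ax9]] pf.hyp[OF xb]] .
    then have "Box Bot \<in> fst x" using closed[OF xW cBot(2)] by blast
    then show "y \<in> PWb" using a unfolding PWb_def PSq_def by auto
  qed
  have p6: "backward_confluent PLe PSq" unfolding backward_confluent_def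
  proof (intro allI impI)
    fix w v v' assume a: "PSq w v" "PLe v v'"
    obtain G c where w: "w = (G,c)" by (cases w)
    have "(G,c) \<in> PW" using a w unfolding PSq_def by auto
    then have W1: "(G,None) \<in> PW" by (simp add: inPW)
    have "PLe w (G,None)" using a W1 w unfolding PSq_def PLe_def by auto
    moreover have "PSq (G,None) v'" using a W1 w unfolding PSq_def PLe_def by auto
    ultimately show "\<exists>w'. PLe w w' \<and> PSq w' v'" by blast
  qed
  have p7: "valuation PW PWb PLe PV" unfolding valuation_def up_closed_def PV_def PWb_def PLe_def by blast
  show ?thesis unfolding CS4_model_def CS4_frame_def bi_int_frame_def using p1 p2 p3 p4 p5 p6 p7 by blast
qed

lemma truth: "\<chi> \<in> S \<Longrightarrow> w \<in> PW \<Longrightarrow> sat PWb PLe PSq PV w \<chi> \<longleftrightarrow> \<chi> \<in> fst w"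
proof (induction \<chi> arbitrary: w)
  case (Var p)
  have "Bot \<in> fst w \<Longrightarrow> Var p \<in> fst w"
  proof -
    assume xb: "Bot \<in> fst w"
    have "pf (fst w) (Var p)" using pf.mpp[OF pf.ax[OF CS4.ipc[OF ipc_thm.ax9]] pf.hyp[OF xb]] .
    then show ?thesis using closed[OF Var.prems(2) Var.prems(1)] by blast
  qed
  then show ?case using Var.prems(2) by (auto simp: PV_def)
next
  case Bot then show ?case by (auto simp: PWb_def)
next
  case (And a b)
  have ab: "a \<in> S" "b \<in> S" using And.prems(1) cAnd by blast+
  have "And a b \<in> fst w \<longleftrightarrow> a \<in> fst w \<and> b \<in> fst w"
  proof
    assume h: "And a b \<in> fst w"
    have "pf (fst w) a" using pf.mpp[OF pf.ax[OF CS4.ipc[OF ipc_thm.ax3]] pf.hyp[OF h]] .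
    moreover have "pf (fst w) b" using pf.mpp[OF pf.ax[OF CS4.ipc[OF ipc_thm.ax4]] pf.hyp[OF h]] .
    ultimately show "a \<in> fst w \<and> b \<in> fst w"
      using closed[OF And.prems(2) ab(1)] closed[OF And.prems(2) ab(2)] by blast
  next
    assume h: "a \<in> fst w \<and> b \<in> fst w"
    have "pf (fst w) (And a b)"
      using pf.mpp[OF pf.mpp[OF pf.ax[OF CS4.ipc[OF ipc_thm.ax5[of a b]]] pf.hyp] pf.hyp] h by blast
    then show "And a b \<in> fst w" using closed[OF And.prems(2) And.prems(1)] by blast
  qed
  then show ?case using And ab by simp
next
  case (Or a b)
  have ab: "a \<in> S" "b \<in> S" using Or.prems(1) cOr by blast+
  have "Or a b \<in> fst w \<longleftrightarrow> a \<in> fst w \<or> b \<in> fst w"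
  proof
    assume h: "Or a b \<in> fst w"
    have "prime (fst w)" using Or.prems(2) by (cases w) (simp add: inPW)
    then show "a \<in> fst w \<or> b \<in> fst w" using h unfolding prime_def by blast
  next
    assume h: "a \<in> fst w \<or> b \<in> fst w"
    have "pf (fst w) (Or a b)"
    proof (cases "a \<in> fst w")
      case True then show ?thesis using pf.mpp[OF pf.ax[OF CS4.ipc[OF ipc_thm.ax6[of a b]]] pf.hyp] by blast
    next
      case False then have "b \<in> fst w" using h by blast
      then show ?thesis using pf.mpp[OF pf.ax[OF CS4.ipc[OF ipc_thm.ax7[of b a]]] pf.hyp] by blast
    qed
    then show "Or a b \<in> fst w" using closed[OF Or.prems(2) Or.prems(1)] by blast
  qed
  then show ?case using Or ab by simp
next
  case (Imp a b)
  have ab: "a \<in> S" "b \<in> S" using Imp.prems(1) cImp by blast+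
  obtain G c where w: "w = (G,c)" by (cases w)
  show ?case
  proof
    assume s: "sat PWb PLe PSq PV w (Imp a b)"
    show "Imp a b \<in> fst w"
    proof (rule ccontr)
      assume n: "Imp a b \<notin> fst w"
      have "\<not> pf (insert a G) b"
      proof
        assume "pf (insert a G) b"
        then have "pf (fst w) (Imp a b)" using ded w by simp
        then show False using closed[OF Imp.prems(2) Imp.prems(1)] n by blast
      qed
      moreover have "insert a G \<subseteq> S" using subS[OF Imp.prems(2)] w ab by auto
      ultimately obtain G' where G': "prime G'" "insert a G \<subseteq> G'" "\<not> pf G' b" using lind by blast
      have W': "(G',None) \<in> PW" using G' by (simp add: inPW)
      have "PLe w (G',None)" using W' G' w Imp.prems(2) by (auto simp: PLe_def)
      moreover have "sat PWb PLe PSq PV (G',None) a" using Imp.IH(1)[OF ab(1) W'] G' by auto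
      ultimately have "sat PWb PLe PSq PV (G',None) b" using s by auto
      then have "b \<in> G'" using Imp.IH(2)[OF ab(2) W'] by auto
      then show False using G' pf.hyp by blast
    qed
  next
    assume h: "Imp a b \<in> fst w"
    show "sat PWb PLe PSq PV w (Imp a b)"
    proof (unfold sat.simps, intro allI impI)
      fix v assume v: "PLe w v" "sat PWb PLe PSq PV v a"
      have vW: "v \<in> PW" using v unfolding PLe_def by auto
      have "a \<in> fst v" using Imp.IH(1)[OF ab(1) vW] v by auto
      moreover have "Imp a b \<in> fst v" using h v unfolding PLe_def by auto
      ultimately have "b \<in> fst v" using closed[OF vW ab(2)] pf.mpp pf.hyp by blast
      then show "sat PWb PLe PSq PV v b" using Imp.IH(2)[OF ab(2) vW] by auto
    qed
  qed
next
  case (Box a)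
  have aS: "a \<in> S" using Box.prems(1) cBox by blast
  obtain G c where w: "w = (G,c)" by (cases w)
  show ?case
  proof
    assume s: "sat PWb PLe PSq PV w (Box a)"
    show "Box a \<in> fst w"
    proof (rule ccontr)
      assume n: "Box a \<notin> fst w"
      let ?B = "{\<chi>. Box \<chi> \<in> G} \<union> {Box \<chi> | \<chi>. Box \<chi> \<in> G}"
      have GS: "G \<subseteq> S" using subS[OF Box.prems(2)] w by auto
      have BS: "?B \<subseteq> S" using GS cBox by auto
      have "\<not> pf ?B a"
      proof
        assume "pf ?B a"
        moreover have "\<forall>\<delta>\<in>?B. pf G (Box \<delta>)"
        proof
          fix \<delta> assume "\<delta> \<in> ?B"
          then show "pf G (Box \<delta>)"
          proof
            assume "\<delta> \<in> {\<chi>. Box \<chi> \<in> G}" then show ?thesis by (simp add: pf.hyp)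
          next
            assume "\<delta> \<in> {Box \<chi> | \<chi>. Box \<chi> \<in> G}"
            then obtain \<chi> where "\<delta> = Box \<chi>" "Box \<chi> \<in> G" by blast
            then show ?thesis using pf.mpp[OF pf.ax[OF CS4.four_box] pf.hyp] by blast
          qed
        qed
        ultimately have "pf G (Box a)" by (rule pf_box)
        then show False using closed[OF Box.prems(2) Box.prems(1)] n w by auto
      qed
      then obtain D where D: "prime D" "?B \<subseteq> D" "\<not> pf D a" using lind[OF BS] by blast
      have W1: "(G,None) \<in> PW" using Box.prems(2) w by (simp add: inPW)
      have W2: "(D,None) \<in> PW" using D by (simp add: inPW)
      have "PLe w (G,None)" using W1 w Box.prems(2) by (auto simp: PLe_def)
      moreover have "PSq (G,None) (D,None)" using W1 W2 D(2) by (auto simp: PSq_def)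
      ultimately have "sat PWb PLe PSq PV (D,None) a" using s by auto
      then have "a \<in> D" using Box.IH[OF aS W2] by auto
      then show False using D pf.hyp by blast
    qed
  next
    assume h: "Box a \<in> fst w"
    show "sat PWb PLe PSq PV w (Box a)"
    proof (unfold sat.simps, intro allI impI)
      fix u v assume uv: "PLe w u" "PSq u v"
      have vW: "v \<in> PW" using uv unfolding PSq_def by auto
      have "a \<in> fst v" using h uv unfolding PLe_def PSq_def by blast
      then show "sat PWb PLe PSq PV v a" using Box.IH[OF aS vW] by auto
    qed
  qed
next
  case (Dia a)
  have aS: "a \<in> S" using Dia.prems(1) cDia by blast
  obtain G c where w: "w = (G,c)" by (cases w)
  show ?case
  proof
    assume s: "sat PWb PLe PSq PV w (Dia a)"
    show "Dia a \<in> fst w"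
    proof (rule ccontr)
      assume n: "Dia a \<notin> fst w"
      have W1: "(G,Some a) \<in> PW" using Dia.prems(2) w n Dia.prems(1) by (simp add: inPW)
      have "PLe w (G,Some a)" using W1 w Dia.prems(2) by (auto simp: PLe_def)
      then obtain v where v: "PSq (G,Some a) v" "sat PWb PLe PSq PV v a" using s unfolding sat.simps by blast
      have vW: "v \<in> PW" and sv: "snd v = Some a" using v(1) unfolding PSq_def by auto
      have "a \<in> fst v" using Dia.IH[OF aS vW] v by auto
      then have "pf (fst v) (Dia a)" using pf.mpp[OF pf.ax[OF CS4.T_dia] pf.hyp] by blast
      then have "Dia a \<in> fst v" using closed[OF vW Dia.prems(1)] by blast
      moreover have "Dia a \<notin> fst v" using vW sv by (cases v) (auto simp: inPW)
      ultimately show False by blast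
    qed
  next
    assume h: "Dia a \<in> fst w"
    show "sat PWb PLe PSq PV w (Dia a)"
    proof (unfold sat.simps, intro allI impI)
      fix u assume u: "PLe w u"
      obtain G' c' where u': "u = (G',c')" by (cases u)
      have uW: "u \<in> PW" using u unfolding PLe_def by auto
      have hd: "Dia a \<in> G'" using h u u' unfolding PLe_def by auto
      show "\<exists>v. PSq u v \<and> sat PWb PLe PSq PV v a"
      proof (cases c')
        case None
        have W2: "(S,None) \<in> PW" using primeS by (simp add: inPW)
        have "PSq u (S,None)" using uW W2 u' None subS[OF uW] cBox by (auto simp: PSq_def)
        moreover have "sat PWb PLe PSq PV (S,None) a" using Dia.IH[OF aS W2] aS by auto
        ultimately show ?thesis by blast
      next
        case (Some \<psi>)
        have dp: "Dia \<psi> \<in> S" "Dia \<psi> \<notin> G'" using uW u' Some by (auto simp: inPW)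
        let ?B = "{\<chi>. Box \<chi> \<in> G'} \<union> {Box \<chi> | \<chi>. Box \<chi> \<in> G'}"
        have GS: "G' \<subseteq> S" using subS[OF uW] u' by auto
        have BS: "insert a ?B \<subseteq> S" using GS cBox aS by auto
        have "\<not> pf (insert a ?B) (Dia \<psi>)"
        proof
          assume "pf (insert a ?B) (Dia \<psi>)"
          then have "pf ?B (Imp a (Dia \<psi>))" by (rule ded)
          moreover have "\<forall>\<delta>\<in>?B. pf G' (Box \<delta>)"
          proof
            fix \<delta> assume "\<delta> \<in> ?B"
            then show "pf G' (Box \<delta>)"
            proof
              assume "\<delta> \<in> {\<chi>. Box \<chi> \<in> G'}" then show ?thesis by (simp add: pf.hyp)
            next
              assume "\<delta> \<in> {Box \<chi> | \<chi>. Box \<chi> \<in> G'}"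
              then obtain \<chi> where "\<delta> = Box \<chi>" "Box \<chi> \<in> G'" by blast
              then show ?thesis using pf.mpp[OF pf.ax[OF CS4.four_box] pf.hyp] by blast
            qed
          qed
          ultimately have "pf G' (Box (Imp a (Dia \<psi>)))" by (rule pf_box)
          then have "pf G' (Imp (Dia a) (Dia (Dia \<psi>)))" using pf.mpp[OF pf.ax[OF CS4.K_dia]] by blast
          then have "pf G' (Dia (Dia \<psi>))" using pf.mpp pf.hyp[OF hd] by blast
          then have "pf G' (Dia \<psi>)" using pf.mpp[OF pf.ax[OF CS4.four_dia]] by blast
          then show False using closed[OF uW dp(1)] dp(2) u' by auto
        qed
        then obtain D where D: "prime D" "insert a ?B \<subseteq> D" "\<not> pf D (Dia \<psi>)" using lind[OF BS] by blast
        have W2: "(D,Some \<psi>) \<in> PW" using D dp pf.hyp by (auto simp: inPW)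
        have "PSq u (D,Some \<psi>)" using uW W2 u' Some D(2) by (auto simp: PSq_def)
        moreover have "sat PWb PLe PSq PV (D,Some \<psi>) a" using Dia.IH[OF aS W2] D by auto
        ultimately show ?thesis by blast
      qed
    qed
  qed
qed

lemma finPW: "finite PW"
proof -
  have "PW \<subseteq> Pow S \<times> (insert None (Some ` S))"
  proof
    fix x assume x: "x \<in> PW"
    obtain G c where xc: "x = (G,c)" by (cases x)
    have "G \<subseteq> S" using x xc by (auto simp: inPW prime_def)
    moreover have "c \<in> insert None (Some ` S)"
    proof (cases c)
      case (Some \<psi>) then have "Dia \<psi> \<in> S" using x xc by (auto simp: inPW)
      then show ?thesis using Some cDia by blast
    qed simp
    ultimately show "x \<in> Pow S \<times> (insert None (Some ` S))" using xc by auto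
  qed
  moreover have "finite (Pow S \<times> (insert None (Some ` S)))" using fin by auto
  ultimately show ?thesis by (rule finite_subset)
qed
end
lemma transport:
  fixes W :: "'a set"
  assumes M: "CS4_model W Wb le sq V" and g: "bij_betw g (N::nat set) W"
  defines "Wb' \<equiv> {x\<in>N. g x \<in> Wb}"
    and "le' \<equiv> \<lambda>x y. x \<in> N \<and> y \<in> N \<and> le (g x) (g y)"
    and "sq' \<equiv> \<lambda>x y. x \<in> N \<and> y \<in> N \<and> sq (g x) (g y)"
    and "V' \<equiv> \<lambda>p. {x\<in>N. g x \<in> V p}"
  shows "CS4_model N Wb' le' sq' V'"
    and "\<And>x. x \<in> N \<Longrightarrow> sat Wb' le' sq' V' x \<chi> \<longleftrightarrow> sat Wb le sq V (g x) \<chi>"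
proof -
  note mf = model_facts[OF M]
  have gN: "\<And>x. x \<in> N \<Longrightarrow> g x \<in> W" using g by (auto simp: bij_betw_def)
  have surj: "\<And>y. y \<in> W \<Longrightarrow> \<exists>x\<in>N. g x = y" using g by (auto simp: bij_betw_def)
  have p1: "preorder_on N le'" unfolding preorder_on_def
  proof (intro conjI)
    show "\<forall>x y. le' x y \<longrightarrow> x \<in> N \<and> y \<in> N" unfolding le'_def by blast
    show "\<forall>x\<in>N. le' x x" unfolding le'_def using mf(2) gN by blast
    show "\<forall>x y z. le' x y \<longrightarrow> le' y z \<longrightarrow> le' x z" unfolding le'_def using mf(3) by blast
  qed
  have p2: "preorder_on N sq'" unfolding preorder_on_def
  proof (intro conjI)
    show "\<forall>x y. sq' x y \<longrightarrow> x \<in> N \<and> y \<in> N" unfolding sq'_def by blast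
    show "\<forall>x\<in>N. sq' x x" unfolding sq'_def using mf(5) gN by blast
    show "\<forall>x y z. sq' x y \<longrightarrow> sq' y z \<longrightarrow> sq' x z" unfolding sq'_def using mf(6) by blast
  qed
  have p3: "Wb' \<subseteq> N" unfolding Wb'_def by blast
  have p4: "up_closed le' Wb'" unfolding up_closed_def Wb'_def le'_def using mf(8) by blast
  have p5: "up_closed sq' Wb'" unfolding up_closed_def Wb'_def sq'_def using mf(9) by blast
  have p6: "backward_confluent le' sq'" unfolding backward_confluent_def
  proof (intro allI impI)
    fix w v v' assume a: "sq' w v" "le' v v'"
    then obtain y where y: "le (g w) y" "sq y (g v')" using mf(10) unfolding sq'_def le'_def by blast
    then have "y \<in> W" using mf(1) by blast
    then obtain x where x: "x \<in> N" "g x = y" using surj by blast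
    have "le' w x" using a x y unfolding le'_def sq'_def by blast
    moreover have "sq' x v'" using a x y unfolding le'_def sq'_def by blast
    ultimately show "\<exists>w'. le' w w' \<and> sq' w' v'" by blast
  qed
  have p7: "valuation N Wb' le' V'" unfolding valuation_def
  proof (intro allI conjI)
    fix p
    show "V' p \<subseteq> N" unfolding V'_def by blast
    show "up_closed le' (V' p)" unfolding up_closed_def V'_def le'_def using mf(12) by blast
    show "Wb' \<subseteq> V' p" unfolding Wb'_def V'_def using mf(13) by blast
  qed
  show "CS4_model N Wb' le' sq' V'"
    unfolding CS4_model_def CS4_frame_def bi_int_frame_def using p1 p2 p3 p4 p5 p6 p7 by blast
  show "\<And>x. x \<in> N \<Longrightarrow> sat Wb' le' sq' V' x \<chi> \<longleftrightarrow> sat Wb le sq V (g x) \<chi>"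
  proof (induction \<chi>)
    case (Var p) then show ?case by (simp add: V'_def)
  next
    case Bot then show ?case by (simp add: Wb'_def)
  next
    case (Imp a b)
    show ?case
    proof
      assume h: "sat Wb' le' sq' V' x (Imp a b)"
      show "sat Wb le sq V (g x) (Imp a b)"
      proof (unfold sat.simps, intro allI impI)
        fix v assume v: "le (g x) v" "sat Wb le sq V v a"
        obtain y where y: "y \<in> N" "g y = v" using surj mf(1)[OF v(1)] by blast
        then have "le' x y" using v Imp.prems unfolding le'_def by auto
        then show "sat Wb le sq V v b" using h Imp.IH y v by auto
      qed
    next
      assume h: "sat Wb le sq V (g x) (Imp a b)"
      show "sat Wb' le' sq' V' x (Imp a b)"
      proof (unfold sat.simps, intro allI impI)
        fix y assume v: "le' x y" "sat Wb' le' sq' V' y a"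
        then have "y \<in> N" "le (g x) (g y)" unfolding le'_def by auto
        then show "sat Wb' le' sq' V' y b" using h Imp.IH v by auto
      qed
    qed
  next
    case (Box a)
    show ?case
    proof
      assume h: "sat Wb' le' sq' V' x (Box a)"
      show "sat Wb le sq V (g x) (Box a)"
      proof (unfold sat.simps, intro allI impI)
        fix u v assume v: "le (g x) u" "sq u v"
        obtain y where y: "y \<in> N" "g y = u" using surj mf(1)[OF v(1)] by blast
        obtain z where z: "z \<in> N" "g z = v" using surj mf(4)[OF v(2)] by blast
        have "le' x y" "sq' y z" using v y z Box.prems unfolding le'_def sq'_def by auto
        then show "sat Wb le sq V v a" using h Box.IH z by auto
      qed
    next
      assume h: "sat Wb le sq V (g x) (Box a)"
      show "sat Wb' le' sq' V' x (Box a)"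
      proof (unfold sat.simps, intro allI impI)
        fix y z assume v: "le' x y" "sq' y z"
        then have "z \<in> N" "le (g x) (g y)" "sq (g y) (g z)" unfolding le'_def sq'_def by auto
        then show "sat Wb' le' sq' V' z a" using h Box.IH by auto
      qed
    qed
  next
    case (Dia a)
    show ?case
    proof
      assume h: "sat Wb' le' sq' V' x (Dia a)"
      show "sat Wb le sq V (g x) (Dia a)"
      proof (unfold sat.simps, intro allI impI)
        fix u assume v: "le (g x) u"
        obtain y where y: "y \<in> N" "g y = u" using surj mf(1)[OF v(1)] by blast
        have "le' x y" using v y Dia.prems unfolding le'_def by auto
        then obtain z where "sq' y z" "sat Wb' le' sq' V' z a" using h by auto
        then have "sq u (g z)" "sat Wb le sq V (g z) a" using Dia.IH y unfolding sq'_def by auto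
        then show "\<exists>v. sq u v \<and> sat Wb le sq V v a" by blast
      qed
    next
      assume h: "sat Wb le sq V (g x) (Dia a)"
      show "sat Wb' le' sq' V' x (Dia a)"
      proof (unfold sat.simps, intro allI impI)
        fix y assume v: "le' x y"
        then have yN: "y \<in> N" "le (g x) (g y)" unfolding le'_def by auto
        then obtain v where v: "sq (g y) v" "sat Wb le sq V v a" using h by auto
        obtain z where z: "z \<in> N" "g z = v" using surj mf(4)[OF v(1)] by blast
        then have "sq' y z" "sat Wb' le' sq' V' z a" using yN v Dia.IH unfolding sq'_def by auto
        then show "\<exists>z. sq' y z \<and> sat Wb' le' sq' V' z a" by blast
      qed
    qed
  qed auto
qed

lemma pf_empty: "pf {} \<chi> \<Longrightarrow> CS4 \<chi>"
  by (induction rule: pf.induct) (auto intro: CS4.MP)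

theorem mainTheorem1:
  fixes \<phi> :: fm
  shows "(\<not> CS4 \<phi> \<longrightarrow>
            (\<exists>(W::nat set) Wb le sq V. finite W \<and> CS4_model W Wb le sq V \<and>
                \<not> valid_in W Wb le sq V \<phi>))
       \<and> (CS4 \<phi> \<longrightarrow>
            (\<forall>(W::'w set) Wb le sq V. CS4_model W Wb le sq V \<longrightarrow> valid_in W Wb le sq V \<phi>))"
proof (intro conjI impI allI)
  fix W :: "'w set" and Wb le sq V
  assume c: "CS4 \<phi>" and M: "CS4_model W Wb le sq V"
  show "valid_in W Wb le sq V \<phi>" unfolding valid_in_def
  proof
    fix w assume "w \<in> W - Wb"
    then have "w \<in> W" by blast
    then show "sat Wb le sq V w \<phi>" using CS4_sound[OF M c] by blast
  qed
next
  assume n: "\<not> CS4 \<phi>"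
  let ?S = "sub \<phi> \<union> {Bot, Box Bot}"
  interpret C: clos ?S
  proof
    show "finite ?S" using sub_fin by auto
  next
    fix a b assume "And a b \<in> ?S" then have "And a b \<in> sub \<phi>" by auto
    then show "a \<in> ?S \<and> b \<in> ?S" using sub_trans[of "And a b" \<phi>] sub_self[of a] sub_self[of b] by auto
  next
    fix a b assume "Or a b \<in> ?S" then have "Or a b \<in> sub \<phi>" by auto
    then show "a \<in> ?S \<and> b \<in> ?S" using sub_trans[of "Or a b" \<phi>] sub_self[of a] sub_self[of b] by auto
  next
    fix a b assume "Imp a b \<in> ?S" then have "Imp a b \<in> sub \<phi>" by auto
    then show "a \<in> ?S \<and> b \<in> ?S" using sub_trans[of "Imp a b" \<phi>] sub_self[of a] sub_self[of b] by auto
  next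
    fix a assume "Dia a \<in> ?S" then have "Dia a \<in> sub \<phi>" by auto
    then show "a \<in> ?S" using sub_trans[of "Dia a" \<phi>] sub_self[of a] by auto
  next
    fix a assume h: "Box a \<in> ?S"
    show "a \<in> ?S"
    proof (cases "a = Bot")
      case False
      then have "Box a \<in> sub \<phi>" using h by auto
      then show ?thesis using sub_trans[of "Box a" \<phi>] sub_self[of a] by auto
    qed simp
  qed simp_all
  have "\<not> pf {} \<phi>" using n pf_empty by blast
  moreover have "{} \<subseteq> ?S" by blast
  ultimately obtain G where G: "C.prime G" "\<not> pf G \<phi>" using C.lind by blast
  have wW: "(G,None) \<in> C.PW" using C.inPW[of G None] G(1) by simp
  have nb: "Bot \<notin> G"
  proof
    assume "Bot \<in> G"
    then have "pf G \<phi>" using pf.mpp[OF pf.ax[OF CS4.ipc[OF ipc_thm.ax9]] pf.hyp] by blast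
    then show False using G(2) by blast
  qed
  have nphi: "\<phi> \<notin> G" using G(2) pf.hyp by blast
  have phS: "\<phi> \<in> ?S" using sub_self by blast
  have ns: "\<not> sat C.PWb C.PLe C.PSq C.PV (G,None) \<phi>" using C.truth[OF phS wW] nphi by simp
  obtain g where g: "bij_betw g {0..<card C.PW} C.PW" using ex_bij_betw_nat_finite[OF C.finPW] by blast
  have "(G,None) \<in> g ` {0..<card C.PW}" using g wW unfolding bij_betw_def by simp
  then obtain x where x0: "(G,None) = g x" "x \<in> {0..<card C.PW}" by (rule imageE)
  then have x: "x \<in> {0..<card C.PW}" "g x = (G,None)" by simp_all
  have xWb: "g x \<notin> C.PWb" using x(2) nb unfolding C.PWb_def by simp
  note T = transport[OF C.is_model g]
  show "\<exists>(W::nat set) Wb le sq V. finite W \<and> CS4_model W Wb le sq V \<and> \<not> valid_in W Wb le sq V \<phi>"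
  proof (intro exI conjI)
    show "finite {0..<card C.PW}" by simp
    show "CS4_model {0..<card C.PW} {x \<in> {0..<card C.PW}. g x \<in> C.PWb}
      (\<lambda>x y. x \<in> {0..<card C.PW} \<and> y \<in> {0..<card C.PW} \<and> C.PLe (g x) (g y))
      (\<lambda>x y. x \<in> {0..<card C.PW} \<and> y \<in> {0..<card C.PW} \<and> C.PSq (g x) (g y))
      (\<lambda>p. {x \<in> {0..<card C.PW}. g x \<in> C.PV p})" by (rule T(1))
    show "\<not> valid_in {0..<card C.PW} {x \<in> {0..<card C.PW}. g x \<in> C.PWb}
      (\<lambda>x y. x \<in> {0..<card C.PW} \<and> y \<in> {0..<card C.PW} \<and> C.PLe (g x) (g y))
      (\<lambda>x y. x \<in> {0..<card C.PW} \<and> y \<in> {0..<card C.PW} \<and> C.PSq (g x) (g y))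
      (\<lambda>p. {x \<in> {0..<card C.PW}. g x \<in> C.PV p}) \<phi>"
      unfolding valid_in_def
    proof
      assume h: "\<forall>w\<in>{0..<card C.PW} - {x \<in> {0..<card C.PW}. g x \<in> C.PWb}.
        sat {x \<in> {0..<card C.PW}. g x \<in> C.PWb}
      (\<lambda>x y. x \<in> {0..<card C.PW} \<and> y \<in> {0..<card C.PW} \<and> C.PLe (g x) (g y))
      (\<lambda>x y. x \<in> {0..<card C.PW} \<and> y \<in> {0..<card C.PW} \<and> C.PSq (g x) (g y))
      (\<lambda>p. {x \<in> {0..<card C.PW}. g x \<in> C.PV p}) w \<phi>"
      have "x \<in> {0..<card C.PW} - {x \<in> {0..<card C.PW}. g x \<in> C.PWb}" using x(1) xWb by blast
      then have "sat {x \<in> {0..<card C.PW}. g x \<in> C.PWb}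
      (\<lambda>x y. x \<in> {0..<card C.PW} \<and> y \<in> {0..<card C.PW} \<and> C.PLe (g x) (g y))
      (\<lambda>x y. x \<in> {0..<card C.PW} \<and> y \<in> {0..<card C.PW} \<and> C.PSq (g x) (g y))
      (\<lambda>p. {x \<in> {0..<card C.PW}. g x \<in> C.PV p}) x \<phi>" using h by blast
      then have "sat C.PWb C.PLe C.PSq C.PV (g x) \<phi>" using T(2)[OF x(1)] by blast
      then show False using ns x(2) by simp
    qed
  qed
qed

end
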